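(* Let $\alpha,\beta,\gamma$ be partitions with $\alpha_1\le2$ and let $\Gamma$ be an LR-tableau of type $(\alpha,\beta,\gamma)$ such that every row of $\Gamma$ contains at most one (non-empty) box. Let $\Delta,\Delta'\in\mathcal D_\Gamma$. Then $\Delta'\to\Delta$ (i.e. $\Delta'<_{\rm arc}\Delta$ and there is no $\Delta''\in\mathcal D_\Gamma$ with $\Delta'<_{\rm arc}\Delta''<_{\rm arc}\Delta$) if and only if $\Delta'$ is obtained from $\Delta$ by a single move of type (A) or (B) which reduces the number of crossings by one.
   Context: For a partition $\lambda$, $\lambda'$ is its conjugate; the diagram of $\lambda$ is drawn with $\lambda'_i$ boxes in row $i$, so the $i$-th row of $\beta\setminus\gamma$ consists of the boxes in columns $\gamma'_i+1,\dots,\beta'_i$. With $\alpha_1\le 2$, $\alpha'=(\alpha'_1,\alpha'_2)$. An LR-tableau of type $(\alpha,\beta,\gamma)$ is a filling of $\beta\setminus\gamma$ with $\alpha'_1$ entries $1$ and $\alpha'_2$ entries $2$, weakly increasing along rows, strictly increasing down columns, such that for each $c\ge0$ the number of entries $1$ in columns to the right of column $c$ is at least the number of entries $2$ there. Place the positive integers on a line in decreasing order from left to right. An arc is a pair $(m,n)$, $m>n$ positive integers (source $m$, target $n$); a pole at $n$ is regarded as an arc $(\infty,n)$. An arc diagram of type $(\alpha,\beta,\gamma)$ is a finite multiset of $\alpha'_2$ arcs and $\alpha'_1-\alpha'_2$ poles with, for each $i$, exactly $\beta'_i-\gamma'_i$ members having source or target $i$. It has LR type $\Gamma$ if for each $i$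 the number of arcs with source $i$ equals the number of entries $2$ in row $i$ of $\Gamma$; $\mathcal D_\Gamma$ is the set of such diagrams. Members $(m,n),(k,r)$ cross iff $r<n<k<m$ or $n<r<m<k$; the number of crossings is the number of crossing pairs. Moves: for $a>b>c>d$, (A) replaces arcs $(a,c),(b,d)$ by $(a,d),(b,c)$; (C) replaces them by $(a,b),(c,d)$; for $a>b>c$, (B) replaces arc $(a,c)$ and pole $(\infty,b)$ by arc $(a,b)$ and pole $(\infty,c)$; (D) replaces them by arc $(b,c)$ and pole $(\infty,a)$. $\Delta\le_{\rm arc}\Delta'$ iff $\Delta$ is obtained from $\Delta'$ by a finite (possibly empty) sequence of moves; $<_{\rm arc}$ is the strict relation. *)

theory Defs
  imports Main "HOL-Library.Multiset" "HOL-Library.Extended_Nat"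
begin

text \<open>A partition is a weakly decreasing list of positive integers; its i-th part
(i >= 1) is the (i-1)-th list entry, and 0 beyond the length.\<close>

definition is_partition :: "nat list \<Rightarrow> bool" where
  "is_partition lam \<longleftrightarrow> sorted_wrt (\<ge>) lam \<and> 0 \<notin> set lam"

definition conj :: "nat list \<Rightarrow> nat \<Rightarrow> nat" where
  "conj lam i = length (filter (\<lambda>x. i \<le> x) lam)"

definition is_box :: "nat list \<Rightarrow> nat list \<Rightarrow> nat \<Rightarrow> nat \<Rightarrow> bool" where
  "is_box \<beta> \<gamma> i c \<longleftrightarrow> 1 \<le> i \<and> conj \<gamma> i < c \<and> c \<le> conj \<beta> i"

definition boxes :: "nat list \<Rightarrow> nat list \<Rightarrow> (nat \<times> nat) set" where
  "boxes \<beta> \<gamma> = {(i, c). is_box \<beta> \<gamma> i c}"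

text \<open>A filling is a function T from (row, column) to entries; only its values on
boxes matter.\<close>

definition is_LR_tableau ::
  "nat list \<Rightarrow> nat list \<Rightarrow> nat list \<Rightarrow> (nat \<Rightarrow> nat \<Rightarrow> nat) \<Rightarrow> bool" where
  "is_LR_tableau \<alpha> \<beta> \<gamma> T \<longleftrightarrow>
     (\<forall>i\<ge>1. conj \<gamma> i \<le> conj \<beta> i) \<and>
     (\<forall>(i, c)\<in>boxes \<beta> \<gamma>. T i c \<in> {1, 2}) \<and>
     card {(i, c)\<in>boxes \<beta> \<gamma>. T i c = 1} = conj \<alpha> 1 \<and>
     card {(i, c)\<in>boxes \<beta> \<gamma>. T i c = 2} = conj \<alpha> 2 \<and>
     (\<forall>i c c'. is_box \<beta> \<gamma> i c \<and> is_box \<beta> \<gamma> i c' \<and> c < c' \<longrightarrow> T i c \<le> T i c') \<and>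
     (\<forall>i i' c. is_box \<beta> \<gamma> i c \<and> is_box \<beta> \<gamma> i' c \<and> i < i' \<longrightarrow> T i c < T i' c) \<and>
     (\<forall>c0. card {(i, c)\<in>boxes \<beta> \<gamma>. c0 < c \<and> T i c = 2}
            \<le> card {(i, c)\<in>boxes \<beta> \<gamma>. c0 < c \<and> T i c = 1})"

definition twos_in_row :: "nat list \<Rightarrow> nat list \<Rightarrow> (nat \<Rightarrow> nat \<Rightarrow> nat) \<Rightarrow> nat \<Rightarrow> nat" where
  "twos_in_row \<beta> \<gamma> T i = card {c. is_box \<beta> \<gamma> i c \<and> T i c = 2}"

text \<open>A member is a pair (source, target); an arc (m,n) is (enat m, n) with m > n,
a pole at n is (\<infinity>, n).\<close>

type_synonym member = "enat \<times> nat"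

definition valid_member :: "member \<Rightarrow> bool" where
  "valid_member x \<longleftrightarrow> 1 \<le> snd x \<and> enat (snd x) < fst x"

definition is_arc :: "member \<Rightarrow> bool" where
  "is_arc x \<longleftrightarrow> fst x \<noteq> \<infinity>"

definition is_pole :: "member \<Rightarrow> bool" where
  "is_pole x \<longleftrightarrow> fst x = \<infinity>"

definition touches :: "nat \<Rightarrow> member \<Rightarrow> bool" where
  "touches i x \<longleftrightarrow> fst x = enat i \<or> snd x = i"

definition is_arc_diagram ::
  "nat list \<Rightarrow> nat list \<Rightarrow> nat list \<Rightarrow> member multiset \<Rightarrow> bool" where
  "is_arc_diagram \<alpha> \<beta> \<gamma> D \<longleftrightarrow>
     (\<forall>x\<in>#D. valid_member x) \<and>
     size (filter_mset is_arc D) = conj \<alpha> 2 \<and>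
     size (filter_mset is_pole D) = conj \<alpha> 1 - conj \<alpha> 2 \<and>
     (\<forall>i\<ge>1. size (filter_mset (touches i) D) = conj \<beta> i - conj \<gamma> i)"

definition D_Gamma ::
  "nat list \<Rightarrow> nat list \<Rightarrow> nat list \<Rightarrow> (nat \<Rightarrow> nat \<Rightarrow> nat) \<Rightarrow> member multiset set" where
  "D_Gamma \<alpha> \<beta> \<gamma> T = {D. is_arc_diagram \<alpha> \<beta> \<gamma> D \<and>
     (\<forall>i\<ge>1. size (filter_mset (\<lambda>x. is_arc x \<and> fst x = enat i) D) = twos_in_row \<beta> \<gamma> T i)}"

definition crosses :: "member \<Rightarrow> member \<Rightarrow> bool" where
  "crosses x y \<longleftrightarrow>
     (let m = fst x; n = enat (snd x); k = fst y; r = enat (snd y) in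
        (r < n \<and> n < k \<and> k < m) \<or> (n < r \<and> r < m \<and> m < k))"

text \<open>Number of (unordered) crossing pairs, counted with multiplicity: each unordered
pair is counted twice among ordered pairs, and no member crosses itself.\<close>

definition crossings :: "member multiset \<Rightarrow> nat" where
  "crossings D = (\<Sum>x\<in>#D. \<Sum>y\<in>#D. if crosses x y then 1 else 0) div 2"

text \<open>move D D': D' is obtained from D by the move.\<close>

definition moveA :: "member multiset \<Rightarrow> member multiset \<Rightarrow> bool" where
  "moveA D D' \<longleftrightarrow> (\<exists>a b c d::nat. a > b \<and> b > c \<and> c > d \<and>
     {#(enat a, c), (enat b, d)#} \<subseteq># D \<and>
     D' = D - {#(enat a, c), (enat b, d)#} + {#(enat a, d), (enat b, c)#})"

definition moveC :: "member multiset \<Rightarrow> member multiset \<Rightarrow> bool" where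
  "moveC D D' \<longleftrightarrow> (\<exists>a b c d::nat. a > b \<and> b > c \<and> c > d \<and>
     {#(enat a, c), (enat b, d)#} \<subseteq># D \<and>
     D' = D - {#(enat a, c), (enat b, d)#} + {#(enat a, b), (enat c, d)#})"

definition moveB :: "member multiset \<Rightarrow> member multiset \<Rightarrow> bool" where
  "moveB D D' \<longleftrightarrow> (\<exists>a b c::nat. a > b \<and> b > c \<and>
     {#(enat a, c), (\<infinity>, b)#} \<subseteq># D \<and>
     D' = D - {#(enat a, c), (\<infinity>, b)#} + {#(enat a, b), (\<infinity>, c)#})"

definition moveD :: "member multiset \<Rightarrow> member multiset \<Rightarrow> bool" where
  "moveD D D' \<longleftrightarrow> (\<exists>a b c::nat. a > b \<and> b > c \<and>
     {#(enat a, c), (\<infinity>, b)#} \<subseteq># D \<and>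
     D' = D - {#(enat a, c), (\<infinity>, b)#} + {#(enat b, c), (\<infinity>, a)#})"

definition arc_move :: "member multiset \<Rightarrow> member multiset \<Rightarrow> bool" where
  "arc_move D D' \<longleftrightarrow> moveA D D' \<or> moveB D D' \<or> moveC D D' \<or> moveD D D'"

definition arc_le :: "member multiset \<Rightarrow> member multiset \<Rightarrow> bool" where
  "arc_le X Y \<longleftrightarrow> arc_move\<^sup>*\<^sup>* Y X"

definition arc_less :: "member multiset \<Rightarrow> member multiset \<Rightarrow> bool" where
  "arc_less X Y \<longleftrightarrow> arc_le X Y \<and> X \<noteq> Y"

end

theory Submission imports Defs begin

definition chi :: "member \<Rightarrow> member \<Rightarrow> nat" where
  "chi x y = (if crosses x y then 1 else 0)"

definition SS :: "member multiset \<Rightarrow> nat" where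
  "SS D = (\<Sum>x\<in>#D. \<Sum>y\<in>#D. chi x y)"

lemma crosses_sym: "crosses x y = crosses y x"
  unfolding crosses_def Let_def by auto
lemma crosses_irrefl: "\<not> crosses x x"
  unfolding crosses_def Let_def by auto
lemma chi_sym: "chi x y = chi y x" by (simp add: chi_def crosses_sym)

lemma SS_add: "SS (add_mset z D) = SS D + 2 * (\<Sum>y\<in>#D. chi z y)"
proof -
  have "SS (add_mset z D) = (\<Sum>y\<in>#add_mset z D. chi z y) + (\<Sum>x\<in>#D. chi x z + (\<Sum>y\<in>#D. chi x y))"
    by (simp add: SS_def)
  also have "\<dots> = (\<Sum>y\<in>#D. chi z y) + (\<Sum>x\<in>#D. chi z x) + SS D"
    using chi_sym[of z] by (simp add: SS_def sum_mset.distrib chi_def crosses_irrefl)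
  finally show ?thesis by simp
qed

lemma SS_even: "SS D = 2 * crossings D"
proof (induction D)
  case empty then show ?case by (simp add: SS_def crossings_def)
next
  case (add x D)
  have "crossings (add_mset x D) = SS (add_mset x D) div 2"
    by (simp add: crossings_def SS_def chi_def)
  then show ?case using add SS_add[of x D] by simp
qed

lemma cr_add: "crossings (add_mset z D) = crossings D + (\<Sum>y\<in>#D. chi z y)"
  using SS_add[of z D] SS_even[of D] SS_even[of "add_mset z D"] by simp

lemma cr_add2: "crossings (add_mset x (add_mset y R)) = crossings R + (\<Sum>e\<in>#R. chi x e + chi y e) + chi x y"
  by (simp add: cr_add sum_mset.distrib)

lemma ptA:
  fixes a b c d r :: nat and k :: enat
  assumes "d < c" "c < b" "b < a" "1 \<le> r" "enat r < k"
   "k \<noteq> enat a" "k\<noteq>enat b" "k \<noteq> enat c" "k \<noteq> enat d"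
   "r \<noteq> a" "r \<noteq> b" "r \<noteq> c" "r \<noteq> d"
  shows "chi (enat a,d) (k,r) + chi (enat b,c) (k,r) \<le> chi (enat a,c) (k,r) + chi (enat b,d) (k,r)
     \<and> (chi (enat a,d) (k,r) + chi (enat b,c) (k,r) < chi (enat a,c) (k,r) + chi (enat b,d) (k,r)
        \<longrightarrow> (\<exists>k'. k = enat k' \<and> b < k' \<and> k' < a \<and> d < r \<and> r < c))"
  using assms by (cases k) (auto simp: chi_def crosses_def Let_def)

lemma ptB:
  fixes a b c r :: nat and k :: enat
  assumes "c < b" "b < a" "1 \<le> r" "enat r < k"
   "k \<noteq> enat a" "k\<noteq>enat b" "k \<noteq> enat c"
   "r \<noteq> a" "r \<noteq> b" "r \<noteq> c"
  shows "chi (enat a,b) (k,r) + chi (\<infinity>,c) (k,r) \<le> chi (enat a,c) (k,r) + chi (\<infinity>,b) (k,r)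
     \<and> (chi (enat a,b) (k,r) + chi (\<infinity>,c) (k,r) < chi (enat a,c) (k,r) + chi (\<infinity>,b) (k,r)
        \<longrightarrow> enat a < k \<and> c < r \<and> r < b)"
  using assms by (cases k) (auto simp: chi_def crosses_def Let_def)

definition good :: "member multiset \<Rightarrow> bool" where
  "good D \<longleftrightarrow> (\<forall>x\<in>#D. valid_member x) \<and> (\<forall>i\<ge>1. size (filter_mset (touches i) D) \<le> 1)"

definition ab :: "member multiset \<Rightarrow> member multiset \<Rightarrow> bool" where
  "ab D D' \<longleftrightarrow> moveA D D' \<or> moveB D D'"

lemma touch2:
  assumes "i \<ge> 1" "good (add_mset x (add_mset e M))" "touches i x" "touches i e"
  shows False
proof -
  have "size (filter_mset (touches i) (add_mset x (add_mset e M))) \<le> 1"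
    using assms(1,2) by (simp add: good_def)
  then show False using assms(3,4) by simp
qed

lemma moveA_form:
  assumes "moveA D D'"
  obtains a b c d R where "a>b" "b>c" "c>d" "D = add_mset (enat a,c) (add_mset (enat b,d) R)"
    "D' = add_mset (enat a,d) (add_mset (enat b,c) R)"
proof -
  from assms obtain a b c d where h: "a>b" "b>c" "c>d" "{#(enat a, c), (enat b, d)#} \<subseteq># D"
     "D' = D - {#(enat a, c), (enat b, d)#} + {#(enat a, d), (enat b, c)#}" unfolding moveA_def by blast
  let ?R = "D - {#(enat a, c), (enat b, d)#}"
  have "D = ?R + {#(enat a, c), (enat b, d)#}" by (rule sym[OF subset_mset.diff_add[OF h(4)]])
  then have "D = add_mset (enat a,c) (add_mset (enat b,d) ?R)" by simp
  moreover have "D' = add_mset (enat a,d) (add_mset (enat b,c) ?R)" using h(5) by simp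
  ultimately show ?thesis using that h(1-3) by blast
qed

lemma moveC_form:
  assumes "moveC D D'"
  obtains a b c d R where "a>b" "b>c" "c>d" "D = add_mset (enat a,c) (add_mset (enat b,d) R)"
    "D' = add_mset (enat a,b) (add_mset (enat c,d) R)"
proof -
  from assms obtain a b c d where h: "a>b" "b>c" "c>d" "{#(enat a, c), (enat b, d)#} \<subseteq># D"
     "D' = D - {#(enat a, c), (enat b, d)#} + {#(enat a, b), (enat c, d)#}" unfolding moveC_def by blast
  let ?R = "D - {#(enat a, c), (enat b, d)#}"
  have "D = ?R + {#(enat a, c), (enat b, d)#}" by (rule sym[OF subset_mset.diff_add[OF h(4)]])
  then have "D = add_mset (enat a,c) (add_mset (enat b,d) ?R)" by simp
  moreover have "D' = add_mset (enat a,b) (add_mset (enat c,d) ?R)" using h(5) by simp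
  ultimately show ?thesis using that h(1-3) by blast
qed

lemma moveB_form:
  assumes "moveB D D'"
  obtains a b c R where "a>b" "b>c" "D = add_mset (enat a,c) (add_mset (\<infinity>,b) R)"
    "D' = add_mset (enat a,b) (add_mset (\<infinity>,c) R)"
proof -
  from assms obtain a b c where h: "a>b" "b>c" "{#(enat a, c), (\<infinity>, b)#} \<subseteq># D"
     "D' = D - {#(enat a, c), (\<infinity>, b)#} + {#(enat a, b), (\<infinity>, c)#}" unfolding moveB_def by blast
  let ?R = "D - {#(enat a, c), (\<infinity>, b)#}"
  have "D = ?R + {#(enat a, c), (\<infinity>, b)#}" by (rule sym[OF subset_mset.diff_add[OF h(3)]])
  then have "D = add_mset (enat a,c) (add_mset (\<infinity>,b) ?R)" by simp
  moreover have "D' = add_mset (enat a,b) (add_mset (\<infinity>,c) ?R)" using h(4) by simp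
  ultimately show ?thesis using that h(1-2) by blast
qed

lemma moveD_form:
  assumes "moveD D D'"
  obtains a b c R where "a>b" "b>c" "D = add_mset (enat a,c) (add_mset (\<infinity>,b) R)"
    "D' = add_mset (enat b,c) (add_mset (\<infinity>,a) R)"
proof -
  from assms obtain a b c where h: "a>b" "b>c" "{#(enat a, c), (\<infinity>, b)#} \<subseteq># D"
     "D' = D - {#(enat a, c), (\<infinity>, b)#} + {#(enat b, c), (\<infinity>, a)#}" unfolding moveD_def by blast
  let ?R = "D - {#(enat a, c), (\<infinity>, b)#}"
  have "D = ?R + {#(enat a, c), (\<infinity>, b)#}" by (rule sym[OF subset_mset.diff_add[OF h(3)]])
  then have "D = add_mset (enat a,c) (add_mset (\<infinity>,b) ?R)" by simp
  moreover have "D' = add_mset (enat b,c) (add_mset (\<infinity>,a) ?R)" using h(4) by simp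
  ultimately show ?thesis using that h(1-2) by blast
qed

lemma moveA_I:
  assumes "a>b" "b>c" "c>d" "D = add_mset (enat a,c) (add_mset (enat b,d) M)"
    "D' = add_mset (enat a,d) (add_mset (enat b,c) M)"
  shows "moveA D D'"
  unfolding moveA_def using assms by (intro exI[of _ a] exI[of _ b] exI[of _ c] exI[of _ d]) simp

lemma moveB_I:
  assumes "a>b" "b>c" "D = add_mset (enat a,c) (add_mset (\<infinity>,b) M)"
    "D' = add_mset (enat a,b) (add_mset (\<infinity>,c) M)"
  shows "moveB D D'"
  unfolding moveB_def using assms by (intro exI[of _ a] exI[of _ b] exI[of _ c]) simp

lemma sum_lt_ex:
  fixes f g :: "member \<Rightarrow> nat"
  assumes "\<forall>e\<in>#R. g e \<le> f e" "(\<Sum>e\<in>#R. g e) \<noteq> (\<Sum>e\<in>#R. f e)"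
  shows "(\<Sum>e\<in>#R. g e) \<le> (\<Sum>e\<in>#R. f e)" "\<exists>e\<in>#R. g e < f e"
proof -
  show "(\<Sum>e\<in>#R. g e) \<le> (\<Sum>e\<in>#R. f e)" using assms(1) by (simp add: sum_mset_mono)
  show "\<exists>e\<in>#R. g e < f e"
  proof (rule ccontr)
    assume "\<not> ?thesis"
    then have "\<forall>e\<in>#R. g e = f e" using assms(1) le_neq_implies_less by blast
    then have "image_mset g R = image_mset f R" by (metis image_mset_cong)
    then show False using assms(2) by simp
  qed
qed

lemma cross_A:
  assumes g: "good D" and m: "moveA D D'"
  shows "crossings D' < crossings D \<and>
     (crossings D' + 1 \<noteq> crossings D \<longrightarrow> (\<exists>D1 D2. ab D D1 \<and> ab D1 D2 \<and> ab\<^sup>*\<^sup>* D2 D'))"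
proof -
  obtain a b c d R where h: "a>b" "b>c" "c>d" and hD: "D = add_mset (enat a,c) (add_mset (enat b,d) R)"
    and hD': "D' = add_mset (enat a,d) (add_mset (enat b,c) R)" by (rule moveA_form[OF m])
  define f where "f e = chi (enat a,c) e + chi (enat b,d) e" for e
  define gg where "gg e = chi (enat a,d) e + chi (enat b,c) e" for e
  have d1: "d \<ge> 1" using g hD by (auto simp: good_def valid_member_def)
  have pt: "gg e \<le> f e \<and> (gg e < f e \<longrightarrow> (\<exists>k'. fst e = enat k' \<and> b < k' \<and> k' < a \<and> d < snd e \<and> snd e < c))"
    if e: "e \<in># R" for e
  proof -
    obtain R0 where R0: "R = add_mset e R0" using e by (metis multi_member_split)
    have g1: "good (add_mset (enat a,c) (add_mset e (add_mset (enat b,d) R0)))"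
      using g hD R0 by (simp add: add_mset_commute)
    have g2: "good (add_mset (enat b,d) (add_mset e (add_mset (enat a,c) R0)))"
      using g hD R0 by (simp add: add_mset_commute)
    have na: "\<not> touches a e" using touch2[OF _ g1, of a] h d1 by (auto simp: touches_def)
    have nc: "\<not> touches c e" using touch2[OF _ g1, of c] h d1 by (auto simp: touches_def)
    have nb: "\<not> touches b e" using touch2[OF _ g2, of b] h d1 by (auto simp: touches_def)
    have nd: "\<not> touches d e" using touch2[OF _ g2, of d] h d1 by (auto simp: touches_def)
    have ve: "valid_member e" using g hD R0 by (simp add: good_def)
    obtain k r where ekr: "e = (k, r)" by fastforce
    show ?thesis using ptA[of d c b a r k] h na nb nc nd ve unfolding ekr f_def gg_def
      by (simp add: touches_def valid_member_def)
  qed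
  have x1: "chi (enat a,c) (enat b,d) = 1" using h by (simp add: chi_def crosses_def Let_def)
  have x0: "chi (enat a,d) (enat b,c) = 0" using h by (simp add: chi_def crosses_def Let_def)
  have cD: "crossings D = crossings R + (\<Sum>e\<in>#R. f e) + 1"
    unfolding hD cr_add2 f_def x1 by simp
  have cD': "crossings D' = crossings R + (\<Sum>e\<in>#R. gg e)"
    unfolding hD' cr_add2 gg_def x0 by simp
  have le: "(\<Sum>e\<in>#R. gg e) \<le> (\<Sum>e\<in>#R. f e)" using pt by (simp add: sum_mset_mono)
  have "crossings D' + 1 \<noteq> crossings D \<longrightarrow> (\<exists>D1 D2. ab D D1 \<and> ab D1 D2 \<and> ab\<^sup>*\<^sup>* D2 D')"
  proof
    assume "crossings D' + 1 \<noteq> crossings D"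
    then have "(\<Sum>e\<in>#R. gg e) \<noteq> (\<Sum>e\<in>#R. f e)" using cD cD' by simp
    then obtain e where e: "e \<in># R" "gg e < f e" using sum_lt_ex[of R gg f] pt by blast
    then obtain k' where k': "fst e = enat k'" "b < k'" "k' < a" "d < snd e" "snd e < c" using pt by blast
    define r where "r = snd e"
    have ee: "e = (enat k', r)" using k' r_def by (metis prod.collapse)
    obtain R0 where R0: "R = add_mset (enat k', r) R0" using e ee by (metis multi_member_split)
    define D1 where "D1 = add_mset (enat a,r) (add_mset (enat k',c) (add_mset (enat b,d) R0))"
    define D2 where "D2 = add_mset (enat a,r) (add_mset (enat k',d) (add_mset (enat b,c) R0))"
    have s1: "moveA D D1"
      by (rule moveA_I[where a=a and b=k' and c=c and d=r and M="add_mset (enat b,d) R0"]) (use k' h r_def in \<open>simp_all add: hD R0 D1_def add_mset_commute\<close>)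
    have s2: "moveA D1 D2"
      by (rule moveA_I[where a=k' and b=b and c=c and d=d and M="add_mset (enat a,r) R0"]) (use k' h r_def in \<open>simp_all add: D2_def D1_def add_mset_commute\<close>)
    have s3: "moveA D2 D'"
      by (rule moveA_I[where a=a and b=k' and c=r and d=d and M="add_mset (enat b,c) R0"]) (use k' h r_def in \<open>simp_all add: D2_def hD' R0 add_mset_commute\<close>)
    show "\<exists>D1 D2. ab D D1 \<and> ab D1 D2 \<and> ab\<^sup>*\<^sup>* D2 D'"
      using s1 s2 r_into_rtranclp[of ab D2 D'] s3 by (auto simp: ab_def)
  qed
  then show ?thesis using cD cD' le by simp
qed

lemma cross_B:
  assumes g: "good D" and m: "moveB D D'"
  shows "crossings D' < crossings D \<and>
     (crossings D' + 1 \<noteq> crossings D \<longrightarrow> (\<exists>D1 D2. ab D D1 \<and> ab D1 D2 \<and> ab\<^sup>*\<^sup>* D2 D'))"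
proof -
  obtain a b c R where h: "a>b" "b>c" and hD: "D = add_mset (enat a,c) (add_mset (\<infinity>,b) R)"
    and hD': "D' = add_mset (enat a,b) (add_mset (\<infinity>,c) R)" by (rule moveB_form[OF m])
  define f where "f e = chi (enat a,c) e + chi (\<infinity>,b) e" for e
  define gg where "gg e = chi (enat a,b) e + chi (\<infinity>,c) e" for e
  have c1: "c \<ge> 1" using g hD by (auto simp: good_def valid_member_def)
  have pt: "gg e \<le> f e \<and> (gg e < f e \<longrightarrow> enat a < fst e \<and> c < snd e \<and> snd e < b)"
    if e: "e \<in># R" for e
  proof -
    obtain R0 where R0: "R = add_mset e R0" using e by (metis multi_member_split)
    have g1: "good (add_mset (enat a,c) (add_mset e (add_mset (\<infinity>,b) R0)))"
      using g hD R0 by (simp add: add_mset_commute)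
    have g2: "good (add_mset (\<infinity>,b) (add_mset e (add_mset (enat a,c) R0)))"
      using g hD R0 by (simp add: add_mset_commute)
    have na: "\<not> touches a e" using touch2[OF _ g1, of a] h c1 by (auto simp: touches_def)
    have nc: "\<not> touches c e" using touch2[OF _ g1, of c] h c1 by (auto simp: touches_def)
    have nb: "\<not> touches b e" using touch2[OF _ g2, of b] h c1 by (auto simp: touches_def)
    have ve: "valid_member e" using g hD R0 by (simp add: good_def)
    obtain k r where ekr: "e = (k, r)" by fastforce
    show ?thesis using ptB[of c b a r k] h na nb nc ve unfolding ekr f_def gg_def
      by (simp add: touches_def valid_member_def)
  qed
  have x1: "chi (enat a,c) (\<infinity>,b) = 1" using h by (simp add: chi_def crosses_def Let_def)
  have x0: "chi (enat a,b) (\<infinity>,c) = 0" using h by (simp add: chi_def crosses_def Let_def)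
  have cD: "crossings D = crossings R + (\<Sum>e\<in>#R. f e) + 1"
    unfolding hD cr_add2 f_def x1 by simp
  have cD': "crossings D' = crossings R + (\<Sum>e\<in>#R. gg e)"
    unfolding hD' cr_add2 gg_def x0 by simp
  have le: "(\<Sum>e\<in>#R. gg e) \<le> (\<Sum>e\<in>#R. f e)" using pt by (simp add: sum_mset_mono)
  have "crossings D' + 1 \<noteq> crossings D \<longrightarrow> (\<exists>D1 D2. ab D D1 \<and> ab D1 D2 \<and> ab\<^sup>*\<^sup>* D2 D')"
  proof
    assume "crossings D' + 1 \<noteq> crossings D"
    then have "(\<Sum>e\<in>#R. gg e) \<noteq> (\<Sum>e\<in>#R. f e)" using cD cD' by simp
    then obtain e where e: "e \<in># R" "gg e < f e" using sum_lt_ex[of R gg f] pt by blast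
    then have k': "enat a < fst e" "c < snd e" "snd e < b" using pt by blast+
    define r where "r = snd e"
    show "\<exists>D1 D2. ab D D1 \<and> ab D1 D2 \<and> ab\<^sup>*\<^sup>* D2 D'"
    proof (cases "fst e")
      case infinity
      have ee: "e = (\<infinity>, r)" using infinity r_def by (metis prod.collapse)
      obtain R0 where R0: "R = add_mset (\<infinity>, r) R0" using e ee by (metis multi_member_split)
      define D1 where "D1 = add_mset (enat a,r) (add_mset (\<infinity>,c) (add_mset (\<infinity>,b) R0))"
      have s1: "moveB D D1"
        by (rule moveB_I[where a=a and b=r and c=c and M="add_mset (\<infinity>,b) R0"]) (use k' h r_def in \<open>simp_all add: hD R0 D1_def add_mset_commute\<close>)
      have s2: "moveB D1 D'"
        by (rule moveB_I[where a=a and b=b and c=r and M="add_mset (\<infinity>,c) R0"]) (use k' h r_def in \<open>simp_all add: hD' R0 D1_def add_mset_commute\<close>)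
      show ?thesis using s1 s2 rtranclp.rtrancl_refl[of ab D'] by (auto simp: ab_def)
    next
      case (enat k)
      have ee: "e = (enat k, r)" using enat r_def by (metis prod.collapse)
      have ka: "a < k" using k' enat by simp
      obtain R0 where R0: "R = add_mset (enat k, r) R0" using e ee by (metis multi_member_split)
      define D1 where "D1 = add_mset (enat k,c) (add_mset (enat a,r) (add_mset (\<infinity>,b) R0))"
      define D2 where "D2 = add_mset (enat a,b) (add_mset (\<infinity>,r) (add_mset (enat k,c) R0))"
      have s1: "moveA D D1"
        by (rule moveA_I[where a=k and b=a and c=r and d=c and M="add_mset (\<infinity>,b) R0"]) (use k' h r_def ka in \<open>simp_all add: hD R0 D1_def add_mset_commute\<close>)
      have s2: "moveB D1 D2"
        by (rule moveB_I[where a=a and b=b and c=r and M="add_mset (enat k,c) R0"]) (use k' h r_def in \<open>simp_all add: D2_def D1_def add_mset_commute\<close>)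
      have s3: "moveB D2 D'"
        by (rule moveB_I[where a=k and b=r and c=c and M="add_mset (enat a,b) R0"]) (use k' h r_def ka in \<open>simp_all add: D2_def hD' R0 add_mset_commute\<close>)
      show ?thesis using s1 s2 r_into_rtranclp[of ab D2 D'] s3 by (auto simp: ab_def)
    qed
  qed
  then show ?thesis using cD cD' le by simp
qed

lemma filter_swap:
  assumes "of_bool (P u) + of_bool (P v) = (of_bool (P x) + of_bool (P y) :: nat)"
  shows "size (filter_mset P (add_mset u (add_mset v R))) = size (filter_mset P (add_mset x (add_mset y R)))"
  using assms by (cases "P u"; cases "P v"; cases "P x"; cases "P y") auto

lemma DG_A:
  assumes "D \<in> D_Gamma \<alpha> \<beta> \<gamma> T" "moveA D D'"
  shows "D' \<in> D_Gamma \<alpha> \<beta> \<gamma> T"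
proof -
  obtain a b c d R where h: "a>b" "b>c" "c>d" and hD: "D = add_mset (enat a,c) (add_mset (enat b,d) R)"
    and hD': "D' = add_mset (enat a,d) (add_mset (enat b,c) R)" by (rule moveA_form[OF assms(2)])
  have sz: "size (filter_mset P D') = size (filter_mset P D)"
    if "of_bool (P (enat a,d)) + of_bool (P (enat b,c)) = (of_bool (P (enat a,c)) + of_bool (P (enat b,d)) :: nat)" for P
    unfolding hD hD' by (rule filter_swap[where P=P and u="(enat a,d)" and v="(enat b,c)" and x="(enat a,c)" and y="(enat b,d)", OF that])
  have v: "\<forall>x\<in>#D. valid_member x" using assms(1) by (simp add: D_Gamma_def is_arc_diagram_def)
  then have "valid_member (enat b, d)" by (simp add: hD)
  then have v': "\<forall>x\<in>#D'. valid_member x" using v h by (auto simp: hD hD' valid_member_def)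
  have s1: "size (filter_mset is_arc D') = size (filter_mset is_arc D)" by (rule sz) (simp add: is_arc_def)
  have s2: "size (filter_mset is_pole D') = size (filter_mset is_pole D)" by (rule sz) (simp add: is_pole_def)
  have s3: "size (filter_mset (touches i) D') = size (filter_mset (touches i) D)" for i
    by (rule sz) (use h in \<open>auto simp: touches_def\<close>)
  have s4: "size (filter_mset (\<lambda>x. is_arc x \<and> fst x = enat i) D') = size (filter_mset (\<lambda>x. is_arc x \<and> fst x = enat i) D)" for i
    by (rule sz) (use h in \<open>auto simp: is_arc_def\<close>)
  show ?thesis using assms(1) v' s1 s2 s3 s4 by (simp add: D_Gamma_def is_arc_diagram_def)
qed

lemma DG_B:
  assumes "D \<in> D_Gamma \<alpha> \<beta> \<gamma> T" "moveB D D'"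
  shows "D' \<in> D_Gamma \<alpha> \<beta> \<gamma> T"
proof -
  obtain a b c R where h: "a>b" "b>c" and hD: "D = add_mset (enat a,c) (add_mset (\<infinity>,b) R)"
    and hD': "D' = add_mset (enat a,b) (add_mset (\<infinity>,c) R)" by (rule moveB_form[OF assms(2)])
  have sz: "size (filter_mset P D') = size (filter_mset P D)"
    if "of_bool (P (enat a,b)) + of_bool (P (\<infinity>,c)) = (of_bool (P (enat a,c)) + of_bool (P (\<infinity>,b)) :: nat)" for P
    unfolding hD hD' by (rule filter_swap[where P=P and u="(enat a,b)" and v="(\<infinity>,c)" and x="(enat a,c)" and y="(\<infinity>,b)", OF that])
  have v: "\<forall>x\<in>#D. valid_member x" using assms(1) by (simp add: D_Gamma_def is_arc_diagram_def)
  then have "valid_member (enat a, c)" by (simp add: hD)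
  then have v': "\<forall>x\<in>#D'. valid_member x" using v h by (auto simp: hD hD' valid_member_def)
  have s1: "size (filter_mset is_arc D') = size (filter_mset is_arc D)" by (rule sz) (simp add: is_arc_def)
  have s2: "size (filter_mset is_pole D') = size (filter_mset is_pole D)" by (rule sz) (simp add: is_pole_def)
  have s3: "size (filter_mset (touches i) D') = size (filter_mset (touches i) D)" for i
    by (rule sz) (use h in \<open>auto simp: touches_def\<close>)
  have s4: "size (filter_mset (\<lambda>x. is_arc x \<and> fst x = enat i) D') = size (filter_mset (\<lambda>x. is_arc x \<and> fst x = enat i) D)" for i
    by (rule sz) (use h in \<open>auto simp: is_arc_def\<close>)
  show ?thesis using assms(1) v' s1 s2 s3 s4 by (simp add: D_Gamma_def is_arc_diagram_def)
qed

lemma DG_good: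
  assumes "\<forall>i\<ge>1. card {c. is_box \<beta> \<gamma> i c} \<le> 1" "D \<in> D_Gamma \<alpha> \<beta> \<gamma> T"
  shows "good D"
proof -
  have "card {c. is_box \<beta> \<gamma> i c} = conj \<beta> i - conj \<gamma> i" if "i \<ge> 1" for i
  proof -
    have "{c. is_box \<beta> \<gamma> i c} = {conj \<gamma> i<..conj \<beta> i}" using that by (auto simp: is_box_def)
    then show ?thesis by simp
  qed
  then show ?thesis using assms by (auto simp: good_def D_Gamma_def is_arc_diagram_def)
qed

definition MS :: "member multiset \<Rightarrow> enat multiset" where
  "MS D = image_mset fst (filter_mset is_arc D)"
definition phi :: "member multiset \<Rightarrow> nat" where
  "phi D = sum_mset (image_mset the_enat (MS D))"

lemma phi_step: "arc_move D D' \<Longrightarrow> phi D' \<le> phi D \<and> (phi D' = phi D \<longrightarrow> ab D D')"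
  unfolding arc_move_def
proof (elim disjE)
  assume m: "moveA D D'"
  obtain a b c d R where h: "a>b" "b>c" "c>d" and hD: "D = add_mset (enat a,c) (add_mset (enat b,d) R)"
    and hD': "D' = add_mset (enat a,d) (add_mset (enat b,c) R)" by (rule moveA_form[OF m])
  show ?thesis using m by (simp add: hD hD' phi_def MS_def is_arc_def ab_def)
next
  assume m: "moveB D D'"
  obtain a b c R where h: "a>b" "b>c" and hD: "D = add_mset (enat a,c) (add_mset (\<infinity>,b) R)"
    and hD': "D' = add_mset (enat a,b) (add_mset (\<infinity>,c) R)" by (rule moveB_form[OF m])
  show ?thesis using m by (simp add: hD hD' phi_def MS_def is_arc_def ab_def)
next
  assume m: "moveC D D'"
  obtain a b c d R where h: "a>b" "b>c" "c>d" and hD: "D = add_mset (enat a,c) (add_mset (enat b,d) R)"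
    and hD': "D' = add_mset (enat a,b) (add_mset (enat c,d) R)" by (rule moveC_form[OF m])
  show ?thesis using h by (simp add: hD hD' phi_def MS_def is_arc_def)
next
  assume m: "moveD D D'"
  obtain a b c R where h: "a>b" "b>c" and hD: "D = add_mset (enat a,c) (add_mset (\<infinity>,b) R)"
    and hD': "D' = add_mset (enat b,c) (add_mset (\<infinity>,a) R)" by (rule moveD_form[OF m])
  show ?thesis using h by (simp add: hD hD' phi_def MS_def is_arc_def)
qed

lemma path_phi: "arc_move\<^sup>*\<^sup>* X Y \<Longrightarrow> phi Y \<le> phi X \<and> (phi Y = phi X \<longrightarrow> ab\<^sup>*\<^sup>* X Y)"
proof (induction rule: rtranclp_induct)
  case base then show ?case by simp
next
  case (step Y Z)
  have a: "phi Z \<le> phi Y" "phi Z = phi Y \<longrightarrow> ab Y Z" using phi_step[OF step.hyps(2)] by auto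
  show ?case
  proof
    show "phi Z \<le> phi X" using a step.IH by simp
    show "phi Z = phi X \<longrightarrow> ab\<^sup>*\<^sup>* X Z"
    proof
      assume e: "phi Z = phi X"
      then have "phi Y = phi X" "phi Z = phi Y" using a step.IH by auto
      then show "ab\<^sup>*\<^sup>* X Z" using a step.IH rtranclp.rtrancl_into_rtrancl by metis
    qed
  qed
qed

lemma count_image_size: "count (image_mset f A) z = size (filter_mset (\<lambda>x. f x = z) A)"
  by (induction A) auto

lemma DG_MS_count:
  assumes "E \<in> D_Gamma \<alpha> \<beta> \<gamma> T"
  shows "count (MS E) z = (case z of \<infinity> \<Rightarrow> 0 | enat i \<Rightarrow> if i \<ge> 1 then twos_in_row \<beta> \<gamma> T i else 0)"
proof -
  have c: "count (MS E) z = size (filter_mset (\<lambda>x. is_arc x \<and> fst x = z) E)"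
    unfolding MS_def count_image_size by (simp add: filter_filter_mset)
  have v: "\<forall>x\<in>#E. valid_member x" using assms by (simp add: D_Gamma_def is_arc_diagram_def)
  show ?thesis
  proof (cases z)
    case infinity
    have "filter_mset (\<lambda>x. is_arc x \<and> fst x = z) E = {#}"
    proof -
      have "(\<lambda>x. is_arc x \<and> fst x = z) = (\<lambda>x. False)" unfolding infinity is_arc_def by blast
      then show ?thesis by simp
    qed
    then show ?thesis unfolding c using infinity by simp
  next
    case (enat i)
    show ?thesis
    proof (cases "i \<ge> 1")
      case True
      then show ?thesis using assms enat c by (simp add: D_Gamma_def)
    next
      case False
      then have "i = 0" by simp
      then have "filter_mset (\<lambda>x. is_arc x \<and> fst x = z) E = {#}"
        using v enat by (auto simp: filter_mset_eq_mempty_iff valid_member_def zero_enat_def[symmetric])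
      then show ?thesis using c enat False by simp
    qed
  qed
qed

lemma DG_phi:
  assumes "E \<in> D_Gamma \<alpha> \<beta> \<gamma> T" "E' \<in> D_Gamma \<alpha> \<beta> \<gamma> T"
  shows "phi E = phi E'"
proof -
  have "MS E = MS E'" by (rule multiset_eqI) (simp add: DG_MS_count[OF assms(1)] DG_MS_count[OF assms(2)])
  then show ?thesis by (simp add: phi_def)
qed

lemma ab_DG: "D \<in> D_Gamma \<alpha> \<beta> \<gamma> T \<Longrightarrow> ab D D' \<Longrightarrow> D' \<in> D_Gamma \<alpha> \<beta> \<gamma> T"
  unfolding ab_def using DG_A DG_B by blast

lemma ab_cr:
  assumes "\<forall>i\<ge>1. card {c. is_box \<beta> \<gamma> i c} \<le> 1" "D \<in> D_Gamma \<alpha> \<beta> \<gamma> T" "ab D D'"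
  shows "crossings D' < crossings D"
  using assms(3) cross_A[OF DG_good[OF assms(1,2)]] cross_B[OF DG_good[OF assms(1,2)]]
  unfolding ab_def by blast

lemma ab_path:
  assumes hb: "\<forall>i\<ge>1. card {c. is_box \<beta> \<gamma> i c} \<le> 1"
    and p: "ab\<^sup>*\<^sup>* X Y" and X: "X \<in> D_Gamma \<alpha> \<beta> \<gamma> T"
  shows "Y \<in> D_Gamma \<alpha> \<beta> \<gamma> T \<and> (Y = X \<or> crossings Y < crossings X)"
  using p
proof (induction rule: rtranclp_induct)
  case base then show ?case using X by simp
next
  case (step Y Z)
  then have "Z \<in> D_Gamma \<alpha> \<beta> \<gamma> T" "crossings Z < crossings Y"
    using ab_DG ab_cr[OF hb] by blast+
  then show ?case using step.IH by auto
qed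

lemma ab_am: "ab\<^sup>*\<^sup>* X Y \<Longrightarrow> arc_move\<^sup>*\<^sup>* X Y"
  by (induction rule: rtranclp_induct) (auto simp: ab_def arc_move_def intro: rtranclp.rtrancl_into_rtrancl)

theorem mainTheorem4:
  fixes \<alpha> \<beta> \<gamma> :: "nat list"
    and T :: "nat \<Rightarrow> nat \<Rightarrow> nat"
    and \<Delta> \<Delta>' :: "member multiset"
  assumes "is_partition \<alpha>" and "is_partition \<beta>" and "is_partition \<gamma>"
    and "\<forall>x\<in>set \<alpha>. x \<le> 2"
    and "is_LR_tableau \<alpha> \<beta> \<gamma> T"
    and "\<forall>i\<ge>1. card {c. is_box \<beta> \<gamma> i c} \<le> 1"
    and "\<Delta> \<in> D_Gamma \<alpha> \<beta> \<gamma> T" and "\<Delta>' \<in> D_Gamma \<alpha> \<beta> \<gamma> T"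
  shows "(arc_less \<Delta>' \<Delta> \<and>
          \<not> (\<exists>\<Delta>''\<in>D_Gamma \<alpha> \<beta> \<gamma> T. arc_less \<Delta>' \<Delta>'' \<and> arc_less \<Delta>'' \<Delta>))
         \<longleftrightarrow> ((moveA \<Delta> \<Delta>' \<or> moveB \<Delta> \<Delta>') \<and> crossings \<Delta>' + 1 = crossings \<Delta>)"
proof -
  let ?DG = "D_Gamma \<alpha> \<beta> \<gamma> T"
  note hb = assms(6)
  have le_ab: "ab\<^sup>*\<^sup>* X Y" if "arc_move\<^sup>*\<^sup>* X Y" "X \<in> ?DG" "Y \<in> ?DG" for X Y
    using path_phi[OF that(1)] DG_phi[OF that(2,3)] by simp
  have lt_ab: "crossings Y < crossings X" if "ab\<^sup>*\<^sup>* X Y" "X \<in> ?DG" "X \<noteq> Y" for X Y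
    using ab_path[OF hb that(1,2)] that(3) by auto
  show ?thesis
  proof
    assume L: "arc_less \<Delta>' \<Delta> \<and> \<not> (\<exists>\<Delta>''\<in>?DG. arc_less \<Delta>' \<Delta>'' \<and> arc_less \<Delta>'' \<Delta>)"
    then have p: "ab\<^sup>*\<^sup>* \<Delta> \<Delta>'" "\<Delta>' \<noteq> \<Delta>" using le_ab assms(7,8) by (auto simp: arc_less_def arc_le_def)
    from p(1) p(2) obtain \<Delta>1 where s: "ab \<Delta> \<Delta>1" "ab\<^sup>*\<^sup>* \<Delta>1 \<Delta>'"
      by (metis converse_rtranclpE)
    have d1: "\<Delta>1 \<in> ?DG" using ab_DG s(1) assms(7) by blast
    have c1: "crossings \<Delta>1 < crossings \<Delta>" using ab_cr[OF hb assms(7) s(1)] .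
    have "\<Delta>1 = \<Delta>'"
    proof (rule ccontr)
      assume "\<Delta>1 \<noteq> \<Delta>'"
      then have "arc_less \<Delta>' \<Delta>1" using ab_am[OF s(2)] by (simp add: arc_less_def arc_le_def)
      moreover have "arc_less \<Delta>1 \<Delta>" using s(1) c1 by (auto simp: arc_less_def arc_le_def arc_move_def ab_def)
      ultimately show False using L d1 by blast
    qed
    then have ab1: "ab \<Delta> \<Delta>'" using s(1) by simp
    moreover have "crossings \<Delta>' + 1 = crossings \<Delta>"
    proof (rule ccontr)
      assume ne: "crossings \<Delta>' + 1 \<noteq> crossings \<Delta>"
      have g: "good \<Delta>" by (rule DG_good[OF hb assms(7)])
      obtain D1 D2 where t: "ab \<Delta> D1" "ab D1 D2" "ab\<^sup>*\<^sup>* D2 \<Delta>'"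
        using ab1 ne cross_A[OF g] cross_B[OF g] unfolding ab_def by blast
      have D1: "D1 \<in> ?DG" using ab_DG t(1) assms(7) by blast
      have D2: "D2 \<in> ?DG" using ab_DG t(2) D1 by blast
      have e1: "crossings D1 < crossings \<Delta>" using ab_cr[OF hb assms(7) t(1)] .
      have e2: "crossings D2 < crossings D1" using ab_cr[OF hb D1 t(2)] .
      have e3: "crossings \<Delta>' \<le> crossings D2" using ab_path[OF hb t(3) D2] by auto
      have "ab\<^sup>*\<^sup>* D1 \<Delta>'" using t(2,3) by (rule converse_rtranclp_into_rtranclp)
      then have "arc_less \<Delta>' D1" using e2 e3 ab_am by (auto simp: arc_less_def arc_le_def)
      moreover have "arc_less D1 \<Delta>" using t(1) e1 by (auto simp: arc_less_def arc_le_def arc_move_def ab_def)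
      ultimately show False using L D1 by blast
    qed
    ultimately show "(moveA \<Delta> \<Delta>' \<or> moveB \<Delta> \<Delta>') \<and> crossings \<Delta>' + 1 = crossings \<Delta>"
      by (simp add: ab_def)
  next
    assume R: "(moveA \<Delta> \<Delta>' \<or> moveB \<Delta> \<Delta>') \<and> crossings \<Delta>' + 1 = crossings \<Delta>"
    then have ab1: "ab \<Delta> \<Delta>'" by (simp add: ab_def)
    have "arc_less \<Delta>' \<Delta>" using R by (auto simp: arc_less_def arc_le_def arc_move_def)
    moreover have "\<not> (\<exists>\<Delta>''\<in>?DG. arc_less \<Delta>' \<Delta>'' \<and> arc_less \<Delta>'' \<Delta>)"
    proof
      assume "\<exists>\<Delta>''\<in>?DG. arc_less \<Delta>' \<Delta>'' \<and> arc_less \<Delta>'' \<Delta>"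
      then obtain E where E: "E \<in> ?DG" "arc_less \<Delta>' E" "arc_less E \<Delta>" by blast
      have "crossings \<Delta>' < crossings E"
        using E le_ab[of E \<Delta>'] lt_ab[of E \<Delta>'] assms(8) by (auto simp: arc_less_def arc_le_def)
      moreover have "crossings E < crossings \<Delta>"
        using E le_ab[of \<Delta> E] lt_ab[of \<Delta> E] assms(7) by (auto simp: arc_less_def arc_le_def)
      ultimately show False using R by simp
    qed
    ultimately show "arc_less \<Delta>' \<Delta> \<and> \<not> (\<exists>\<Delta>''\<in>?DG. arc_less \<Delta>' \<Delta>'' \<and> arc_less \<Delta>'' \<Delta>)" by blast
  qed
qed

end
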